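(* For all $m\ge2$, $n\ge2$ there exists a proportional mechanism $(A,q)$ for the goods allocation problem over the set $\mathcal{N}$ of normalized instances such that $\min_{i\in[m]}v_i(A(v)_i)=\mathrm{OPT}(v)$ for every $v\in\mathcal{N}$.
   Context: Goods allocation: $m$ agents $[m]$, $n$ goods $[n]$; an instance is a matrix $v\in\mathbb{R}_{\ge0}^{m\times n}$, $v_i(S)=\sum_{j\in S}v_{i,j}$. Normalized instances: $\mathcal{N}=\{v\in\mathbb{R}_{\ge0}^{m\times n}:\exists C\text{ with }v_i([n])=C\ \forall i\in[m]\}$. An allocation is a tuple of pairwise disjoint subsets of $[n]$ with union $[n]$. A mechanism $(A,q)$ assigns to each instance an allocation $A(v)$ and transfers $q(v)\in\mathbb{R}^m$; it is proportional if for every instance $v$ and $i\in[m]$: $v_i(A_i)-q_i\ge\frac1m\sum_{j\in[m]}(v_i(A_j)-q_j)$. $\mathrm{OPT}(v)=\max_X\min_{i\in[m]}v_i(X_i)$ over all allocations $X$. *)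

theory Defs
  imports Complex_Main
begin

text \<open>Agents are 0..<m, goods are 0..<n. An instance is v :: nat => nat => real,
  v i j = value of agent i for good j (only i < m, j < n are relevant).\<close>

definition val :: "(nat \<Rightarrow> nat \<Rightarrow> real) \<Rightarrow> nat \<Rightarrow> nat set \<Rightarrow> real" where
  "val v i S = (\<Sum>j\<in>S. v i j)"

definition instance_nonneg :: "nat \<Rightarrow> nat \<Rightarrow> (nat \<Rightarrow> nat \<Rightarrow> real) \<Rightarrow> bool" where
  "instance_nonneg m n v \<longleftrightarrow> (\<forall>i<m. \<forall>j<n. v i j \<ge> 0)"

definition normalized :: "nat \<Rightarrow> nat \<Rightarrow> (nat \<Rightarrow> nat \<Rightarrow> real) \<Rightarrow> bool" where
  "normalized m n v \<longleftrightarrow> instance_nonneg m n v \<and>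
     (\<exists>C. \<forall>i<m. val v i {0..<n} = C)"

definition is_alloc :: "nat \<Rightarrow> nat \<Rightarrow> (nat \<Rightarrow> nat set) \<Rightarrow> bool" where
  "is_alloc m n X \<longleftrightarrow> (\<forall>i<m. \<forall>k<m. i \<noteq> k \<longrightarrow> X i \<inter> X k = {}) \<and>
     (\<Union>i<m. X i) = {0..<n}"

definition OPT :: "nat \<Rightarrow> nat \<Rightarrow> (nat \<Rightarrow> nat \<Rightarrow> real) \<Rightarrow> real" where
  "OPT m n v = Max {Min ((\<lambda>i. val v i (X i)) ` {..<m}) | X. is_alloc m n X}"

definition proportional_on ::
  "nat \<Rightarrow> ((nat \<Rightarrow> nat \<Rightarrow> real) \<Rightarrow> bool) \<Rightarrow>
   ((nat \<Rightarrow> nat \<Rightarrow> real) \<Rightarrow> nat \<Rightarrow> nat set) \<Rightarrow>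
   ((nat \<Rightarrow> nat \<Rightarrow> real) \<Rightarrow> nat \<Rightarrow> real) \<Rightarrow> bool" where
  "proportional_on m P A q \<longleftrightarrow> (\<forall>v. P v \<longrightarrow> (\<forall>i<m.
     val v i (A v i) - q v i \<ge> (1 / real m) * (\<Sum>k<m. val v i (A v k) - q v k)))"

end

theory Submission
  imports Defs "HOL-Library.FuncSet"
begin

definition mval :: "nat \<Rightarrow> (nat \<Rightarrow> nat \<Rightarrow> real) \<Rightarrow> (nat \<Rightarrow> nat set) \<Rightarrow> real" where
  "mval m v X = Min ((\<lambda>i. val v i (X i)) ` {..<m})"

definition welf :: "nat \<Rightarrow> (nat \<Rightarrow> nat \<Rightarrow> real) \<Rightarrow> (nat \<Rightarrow> nat set) \<Rightarrow> real" where
  "welf m v X = (\<Sum>i<m. val v i (X i))"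

lemma alloc_sub: "is_alloc m n X \<Longrightarrow> i < m \<Longrightarrow> X i \<subseteq> {0..<n}"
  unfolding is_alloc_def by blast

lemma alloc_sum:
  assumes "is_alloc m n X"
  shows "(\<Sum>k<m. val v i (X k)) = val v i {0..<n}"
proof -
  have "val v i {0..<n} = sum (v i) (\<Union>k<m. X k)"
    using assms unfolding is_alloc_def val_def by simp
  also have "\<dots> = (\<Sum>k<m. sum (v i) (X k))"
    apply (rule sum.UNION_disjoint)
      apply simp
     apply (meson alloc_sub[OF assms] finite_atLeastLessThan finite_subset lessThan_iff)
    using assms unfolding is_alloc_def by auto
  finally show ?thesis by (simp add: val_def)
qed

lemma OPT_eq: "OPT m n v = Max {mval m v X | X. is_alloc m n X}"
  by (simp add: OPT_def mval_def)

lemma mval_restrict: "mval m v (restrict X {..<m}) = mval m v X"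
  unfolding mval_def by (auto intro!: arg_cong[where f=Min] image_cong)

lemma welf_restrict: "welf m v (restrict X {..<m}) = welf m v X"
  unfolding welf_def by simp

lemma is_alloc_restrict: "is_alloc m n (restrict X {..<m}) = is_alloc m n X"
  unfolding is_alloc_def by simp

lemma restrict_PiE: "is_alloc m n X \<Longrightarrow> restrict X {..<m} \<in> PiE {..<m} (\<lambda>_. Pow {0..<n})"
proof -
  assume a: "is_alloc m n X"
  show ?thesis using alloc_sub[OF a] by auto
qed

lemma fin_vals: "finite {mval m v X | X. is_alloc m n X}"
proof -
  have "{mval m v X | X. is_alloc m n X} \<subseteq> (\<lambda>Y. mval m v Y) ` (PiE {..<m} (\<lambda>_. Pow {0..<n}))"
  proof
    fix r assume "r \<in> {mval m v X | X. is_alloc m n X}"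
    then obtain X where "is_alloc m n X" "r = mval m v X" by auto
    then show "r \<in> (\<lambda>Y. mval m v Y) ` (PiE {..<m} (\<lambda>_. Pow {0..<n}))"
      using restrict_PiE[OF \<open>is_alloc m n X\<close>] mval_restrict[of m v X] by (intro image_eqI[of _ _ "restrict X {..<m}"]) simp_all
  qed
  moreover have "finite (PiE {..<m} (\<lambda>_. Pow {0..<n}))" by (rule finite_PiE) auto
  ultimately show ?thesis by (meson finite_imageI finite_subset)
qed

lemma ex_alloc: "m \<ge> 1 \<Longrightarrow> is_alloc m n (\<lambda>i. if i = 0 then {0..<n} else {})"
  unfolding is_alloc_def by (auto split: if_splits)

lemma OPT_ge: "is_alloc m n X \<Longrightarrow> mval m v X \<le> OPT m n v"
proof -
  assume a: "is_alloc m n X"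
  then have "mval m v X \<in> {mval m v X | X. is_alloc m n X}" by blast
  then show ?thesis unfolding OPT_eq by (rule Max_ge[OF fin_vals])
qed

lemma OPT_att: "m \<ge> 1 \<Longrightarrow> \<exists>X. is_alloc m n X \<and> mval m v X = OPT m n v"
proof -
  assume "m \<ge> 1"
  then have "is_alloc m n (\<lambda>i. if i = 0 then {0..<n} else {})" by (rule ex_alloc)
  then have "mval m v (\<lambda>i. if i = 0 then {0..<n} else {}) \<in> {mval m v X | X. is_alloc m n X}" by blast
  then have ne: "{mval m v X | X. is_alloc m n X} \<noteq> {}" by blast
  have "OPT m n v \<in> {mval m v X | X. is_alloc m n X}"
    unfolding OPT_eq by (rule Max_in[OF fin_vals ne])
  then show ?thesis apply (simp only: mem_Collect_eq) apply (elim exE conjE)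
    apply (rule exI) apply (rule conjI) apply assumption apply (rule sym) apply assumption done
qed

lemma cyc: "finite B \<Longrightarrow> B \<noteq> {} \<Longrightarrow> f ` B \<subseteq> B \<Longrightarrow> \<exists>Z\<subseteq>B. Z \<noteq> {} \<and> f ` Z = Z"
proof (induction "card B" arbitrary: B rule: less_induct)
  case less
  show ?case
  proof (cases "f ` B = B")
    case True
    have "B \<subseteq> B \<and> B \<noteq> {} \<and> f ` B = B" using True less.prems(2) by simp
    then show ?thesis by (rule exI)
  next
    case False
    then have ps: "f ` B \<subset> B" using less.prems(3) by (simp add: psubset_eq)
    have c: "card (f ` B) < card B" using psubset_card_mono[OF less.prems(1) ps] .
    have s: "f ` (f ` B) \<subseteq> f ` B" using less.prems(3) by blast
    have fi: "finite (f ` B)" using less.prems(1) by simp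
    have ne: "f ` B \<noteq> {}" using less.prems(2) by simp
    obtain Z where "Z \<subseteq> f ` B" "Z \<noteq> {}" "f ` Z = Z"
      using less.hyps[OF c fi ne s] by blast
    then have "Z \<subseteq> B \<and> Z \<noteq> {} \<and> f ` Z = Z" using ps by blast
    then show ?thesis by (rule exI)
  qed
qed

lemma main_ex:
  assumes m1: "m \<ge> 1" and nv: "normalized m n v"
  shows "\<exists>X. is_alloc m n X \<and> mval m v X = OPT m n v \<and> val v 0 {0..<n} \<le> welf m v X"
proof -
  define G where "G = {X \<in> PiE {..<m} (\<lambda>_. Pow {0..<n}). is_alloc m n X \<and> mval m v X = OPT m n v}"
  have "G \<subseteq> PiE {..<m} (\<lambda>_. Pow {0..<n})" unfolding G_def by blast
  moreover have "finite (PiE {..<m} (\<lambda>_. Pow {0..<n}))" by (rule finite_PiE) auto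
  ultimately have finG: "finite G" by (rule finite_subset)
  obtain X1 where X1: "is_alloc m n X1" "mval m v X1 = OPT m n v" using OPT_att[OF m1] by blast
  have "restrict X1 {..<m} \<in> PiE {..<m} (\<lambda>_. Pow {0..<n})" using restrict_PiE[OF X1(1)] .
  moreover have "is_alloc m n (restrict X1 {..<m})" using X1(1) is_alloc_restrict by blast
  moreover have "mval m v (restrict X1 {..<m}) = OPT m n v" using X1(2) mval_restrict by simp
  ultimately have "restrict X1 {..<m} \<in> G" unfolding G_def by blast
  then have neG: "G \<noteq> {}" by blast
  have fi: "finite (welf m v ` G)" using finG by (rule finite_imageI)
  have ne: "welf m v ` G \<noteq> {}" using neG by blast
  have "Max (welf m v ` G) \<in> welf m v ` G" using Max_in[OF fi ne] .
  then obtain X where XG: "X \<in> G" and Xmax0: "Max (welf m v ` G) = welf m v X" by (rule imageE)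
  note Xmax = Xmax0[symmetric]
  have Xmx: "welf m v Y \<le> welf m v X" if "Y \<in> G" for Y
    unfolding Xmax using Max_ge[OF fi] that by blast
  have Xa: "is_alloc m n X" and Xo: "mval m v X = OPT m n v" using XG unfolding G_def by blast+
  define C where "C = val v 0 {0..<n}"
  have rowC: "\<And>i. i < m \<Longrightarrow> (\<Sum>k<m. val v i (X k)) = C"
  proof -
    fix i assume "i < m"
    obtain C' where "\<forall>i<m. val v i {0..<n} = C'" using nv unfolding normalized_def by blast
    then have "val v i {0..<n} = C" unfolding C_def using \<open>i<m\<close> m1 by simp
    then show "(\<Sum>k<m. val v i (X k)) = C" using alloc_sum[OF Xa] by simp
  qed
  have diag_ge: "OPT m n v \<le> val v k (X k)" if k: "k < m" for k
  proof -
    have "mval m v X \<le> val v k (X k)" unfolding mval_def using k by (intro Min_le) auto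
    then show ?thesis using Xo by simp
  qed
  show ?thesis
  proof (rule ccontr)
    assume nt: "\<not> ?thesis"
    have lt: "welf m v X < C"
    proof (rule ccontr)
      assume "\<not> welf m v X < C"
      then have "is_alloc m n X \<and> mval m v X = OPT m n v \<and> val v 0 {0..<n} \<le> welf m v X"
        using Xa Xo unfolding C_def by simp
      then have "\<exists>X. is_alloc m n X \<and> mval m v X = OPT m n v \<and> val v 0 {0..<n} \<le> welf m v X" by blast
      with nt show False by contradiction
    qed
    have exk: "\<forall>i\<in>{..<m}. \<exists>k<m. val v i (X k) > val v k (X k)"
    proof
      fix i assume "i \<in> {..<m}"
      then have "(\<Sum>k<m. val v i (X k) - val v k (X k)) = C - welf m v X"
        using rowC unfolding welf_def by (simp add: sum_subtractf)
      then have "0 < (\<Sum>k<m. val v i (X k) - val v k (X k))" using lt by simp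
      show "\<exists>k<m. val v i (X k) > val v k (X k)"
      proof (rule ccontr)
        assume "\<not> (\<exists>k<m. val v i (X k) > val v k (X k))"
        then have "(\<Sum>k<m. val v i (X k) - val v k (X k)) \<le> 0"
          by (intro sum_nonpos) auto
        then show False using \<open>0 < _\<close> by simp
      qed
    qed
    define f where "f i = (SOME k. k < m \<and> val v i (X k) > val v k (X k))" for i
    have f: "\<And>i. i < m \<Longrightarrow> f i < m \<and> val v i (X (f i)) > val v (f i) (X (f i))"
    proof -
      fix i assume "i < m"
      then have "\<exists>k. k < m \<and> val v i (X k) > val v k (X k)" using exk by auto
      then show "f i < m \<and> val v i (X (f i)) > val v (f i) (X (f i))"
        unfolding f_def by (rule someI_ex)
    qed
    have fim: "f ` {..<m} \<subseteq> {..<m}" using f by auto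
    have "0 \<in> {..<m}" using m1 by simp
    then have nem: "{..<m} \<noteq> {}" by blast
    obtain Z where Z: "Z \<subseteq> {..<m}" "Z \<noteq> {}" "f ` Z = Z"
      using cyc[OF finite_lessThan nem fim] by blast
    have finZ: "finite Z" using finite_subset[OF Z(1)] by simp
    have injZ: "inj_on f Z" using Z finZ by (simp add: eq_card_imp_inj_on)
    define g where "g i = (if i \<in> Z then f i else i)" for i
    have gimg: "g ` {..<m} = {..<m}"
    proof -
      have "g ` {..<m} = g ` Z \<union> g ` ({..<m} - Z)" using Z by blast
      also have "g ` Z = f ` Z" unfolding g_def by (rule image_cong) auto
      also have "f ` Z = Z" using Z by simp
      also have "g ` ({..<m} - Z) = {..<m} - Z" unfolding g_def by auto
      finally show ?thesis using Z by blast
    qed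
    have ginj: "inj_on g {..<m}"
      by (rule eq_card_imp_inj_on) (auto simp: gimg)
    define Y where "Y = restrict (\<lambda>i. X (g i)) {..<m}"
    have Ya: "is_alloc m n Y"
      unfolding is_alloc_def
    proof (intro conjI allI impI)
      fix i k assume "i < m" "k < m" "i \<noteq> k"
      then have "g i \<noteq> g k" "g i < m" "g k < m" using ginj gimg by (auto dest: inj_onD)
      then show "Y i \<inter> Y k = {}" using Xa \<open>i<m\<close> \<open>k<m\<close> unfolding Y_def is_alloc_def by auto
    next
      have "(\<Union>i<m. Y i) = (\<Union>i<m. X (g i))" unfolding Y_def by simp
      also have "\<dots> = (\<Union>k\<in>g ` {..<m}. X k)" by simp
      also have "\<dots> = {0..<n}" using Xa gimg unfolding is_alloc_def by simp
      finally show "(\<Union>i<m. Y i) = {0..<n}" .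
    qed
    have YP: "Y \<in> PiE {..<m} (\<lambda>_. Pow {0..<n})" using Ya alloc_sub[OF Ya] unfolding Y_def
      by (auto simp: PiE_def Pi_def)
    have Yge: "\<And>i. i < m \<Longrightarrow> OPT m n v \<le> val v i (Y i)"
    proof -
      fix i assume i: "i < m"
      show "OPT m n v \<le> val v i (Y i)"
      proof (cases "i \<in> Z")
        case True
        have "Y i = X (f i)" using i True by (simp add: Y_def g_def)
        moreover have "f i < m" "val v i (X (f i)) > val v (f i) (X (f i))" using f[OF i] by auto
        moreover have "OPT m n v \<le> val v (f i) (X (f i))" using diag_ge \<open>f i < m\<close> by blast
        ultimately show ?thesis by simp
      next
        case False
        have "Y i = X i" using i False by (simp add: Y_def g_def)
        then show ?thesis using diag_ge[OF i] by simp
      qed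
    qed
    have "OPT m n v \<le> mval m v Y" unfolding mval_def
    proof (subst Min_ge_iff)
      show "finite ((\<lambda>i. val v i (Y i)) ` {..<m})" by simp
      show "(\<lambda>i. val v i (Y i)) ` {..<m} \<noteq> {}" using nem by blast
      show "\<forall>a\<in>(\<lambda>i. val v i (Y i)) ` {..<m}. OPT m n v \<le> a" using Yge by blast
    qed
    then have "mval m v Y = OPT m n v" using OPT_ge[OF Ya, of v] by linarith
    then have "Y \<in> G" unfolding G_def using Ya YP by blast
    then have le: "welf m v Y \<le> welf m v X" by (rule Xmx)
    have split1: "welf m v Y = (\<Sum>i\<in>Z. val v i (X (f i))) + (\<Sum>i\<in>{..<m}-Z. val v i (X i))"
    proof -
      have "welf m v Y = (\<Sum>i\<in>Z. val v i (Y i)) + (\<Sum>i\<in>{..<m}-Z. val v i (Y i))"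
        unfolding welf_def using sum.subset_diff[OF Z(1) finite_lessThan, of "\<lambda>i. val v i (Y i)"] by (simp add: add.commute)
      moreover have "(\<Sum>i\<in>Z. val v i (Y i)) = (\<Sum>i\<in>Z. val v i (X (f i)))"
        using Z unfolding Y_def g_def by (intro sum.cong) auto
      moreover have "(\<Sum>i\<in>{..<m}-Z. val v i (Y i)) = (\<Sum>i\<in>{..<m}-Z. val v i (X i))"
        unfolding Y_def g_def by (intro sum.cong) auto
      ultimately show ?thesis by simp
    qed
    have split2: "welf m v X = (\<Sum>i\<in>Z. val v i (X i)) + (\<Sum>i\<in>{..<m}-Z. val v i (X i))"
      unfolding welf_def using sum.subset_diff[OF Z(1) finite_lessThan, of "\<lambda>i. val v i (X i)"] by (simp add: add.commute)
    have "(\<Sum>i\<in>Z. val v i (X i)) = (\<Sum>i\<in>Z. val v (f i) (X (f i)))"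
    proof -
      have "(\<Sum>i\<in>f ` Z. val v i (X i)) = (\<Sum>i\<in>Z. val v (f i) (X (f i)))"
        using sum.reindex[OF injZ, of "\<lambda>k. val v k (X k)"] by (simp add: comp_def)
      then show ?thesis using Z(3) by simp
    qed
    also have "\<dots> < (\<Sum>i\<in>Z. val v i (X (f i)))"
    proof (rule sum_strict_mono[OF finZ Z(2)])
      fix i assume "i \<in> Z"
      then have "i < m" using Z(1) by blast
      then show "val v (f i) (X (f i)) < val v i (X (f i))" using f by blast
    qed
    finally show False using le split1 split2 by linarith
  qed
qed


theorem mainTheorem9:
  fixes m n :: nat
  assumes "m \<ge> 2" and "n \<ge> 2"
  shows "\<exists>(A :: (nat \<Rightarrow> nat \<Rightarrow> real) \<Rightarrow> nat \<Rightarrow> nat set)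
            (q :: (nat \<Rightarrow> nat \<Rightarrow> real) \<Rightarrow> nat \<Rightarrow> real).
           (\<forall>v. normalized m n v \<longrightarrow> is_alloc m n (A v)) \<and>
           proportional_on m (normalized m n) A q \<and>
           (\<forall>v. normalized m n v \<longrightarrow>
              Min ((\<lambda>i. val v i (A v i)) ` {..<m}) = OPT m n v)"
proof -
  have m1: "m \<ge> 1" using assms(1) by simp
  define A where "A v = (SOME X. is_alloc m n X \<and> mval m v X = OPT m n v \<and> val v 0 {0..<n} \<le> welf m v X)"
    for v :: "nat \<Rightarrow> nat \<Rightarrow> real"
  define q where "q v i = val v i (A v i)" for v :: "nat \<Rightarrow> nat \<Rightarrow> real" and i
  have hA: "is_alloc m n (A v) \<and> mval m v (A v) = OPT m n v \<and> val v 0 {0..<n} \<le> welf m v (A v)"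
    if nv: "normalized m n v" for v
    unfolding A_def by (rule someI_ex[OF main_ex[OF m1 nv]])
  have P1: "\<forall>v. normalized m n v \<longrightarrow> is_alloc m n (A v)" using hA by blast
  have P3: "\<forall>v. normalized m n v \<longrightarrow> Min ((\<lambda>i. val v i (A v i)) ` {..<m}) = OPT m n v"
    using hA unfolding mval_def by blast
  have P2: "proportional_on m (normalized m n) A q"
    unfolding proportional_on_def
  proof (intro allI impI)
    fix v i assume nv: "normalized m n v" and i: "i < m"
    obtain C' where C': "\<forall>i<m. val v i {0..<n} = C'" using nv unfolding normalized_def by blast
    have eqC: "val v i {0..<n} = val v 0 {0..<n}" using C' i m1 by simp
    have "(\<Sum>k<m. val v i (A v k) - q v k) = (\<Sum>k<m. val v i (A v k)) - welf m v (A v)"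
      unfolding q_def welf_def by (simp add: sum_subtractf)
    also have "\<dots> = val v 0 {0..<n} - welf m v (A v)"
      using alloc_sum[of m n "A v" v i] hA[OF nv] eqC by simp
    also have "\<dots> \<le> 0" using hA[OF nv] by simp
    finally have le0: "(\<Sum>k<m. val v i (A v k) - q v k) \<le> 0" .
    have "(1 / real m) * (\<Sum>k<m. val v i (A v k) - q v k) \<le> 0"
      using le0 by (simp add: divide_nonpos_nonneg)
    then show "(1 / real m) * (\<Sum>k<m. val v i (A v k) - q v k) \<le> val v i (A v i) - q v i"
      unfolding q_def by simp
  qed
  show ?thesis using P1 P2 P3 by blast
qed

end
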